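(* Let $H\in\mathbb{R}^{n_z\times n_z}$ be symmetric positive definite, $F\in\mathbb{R}^{n_x\times n_z}$, $G\in\mathbb{R}^{n_c\times n_z}$, $S\in\mathbb{R}^{n_c\times n_x}$, $w\in\mathbb{R}^{n_c}$, and assume $\{z: Gz\le Sx+w\}\neq\emptyset$ for every $x\in\mathbb{R}^{n_x}$. Let $\kappa$ be a global Lipschitz constant and let $x,\hat{x}\in\mathbb{R}^{n_x}$. Let $v(\hat{x})=(\hat{x},z^*(\hat{x}))\in\mathbb{R}^{n_x+n_z}$, $$\mathbb{D}(x)=\{j\in\{1,\dots,n_c\}: \mathcal{B}(z^*(\hat{x}),\kappa\|x-\hat{x}\|)\subseteq\mathcal{Z}_j(x)\},$$ $$\mathbb{E}(x)=\{j\in\{1,\dots,n_c\}: \mathcal{B}(v(\hat{x}),\sqrt{1+\kappa^2}\,\|x-\hat{x}\|)\subseteq\mathcal{V}_j\}.$$ Then (a) $v(\hat{x})\in\mathcal{V}$, and (b) $\mathbb{E}(x)\subseteq\mathbb{D}(x)$.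
   Context: mp-QP$(x)$: minimize $V(z)=\frac12z^THz+x^TFz$ over $\mathcal{Z}(x)=\{z: Gz\le Sx+w\}$, with unique minimizer $z^*(x)$. $G_j,S_j$ are the $j$-th rows of $G,S$, $w_j$ the $j$-th entry of $w$, $\mathcal{Z}_j(x)=\{z: G_jz\le S_jx+w_j\}$. For $\mathbb{I}\subseteq\{1,\dots,n_c\}$, $z^*(x,\mathbb{I})$ is the unique minimizer of $V$ subject to only the constraints indexed by $\mathbb{I}$. A global Lipschitz constant is $\kappa\in\mathbb{R}$ with $\|z^*(x_1,\mathbb{I})-z^*(x_2,\mathbb{I})\|\le\kappa\|x_1-x_2\|$ for all $x_1,x_2$ and all $\mathbb{I}$. Lifted sets: with $\bar H=[-S,\;G]\in\mathbb{R}^{n_c\times(n_x+n_z)}$ and $\bar H_j$ its $j$-th row, $\mathcal{V}=\{v\in\mathbb{R}^{n_x+n_z}: \bar Hv\le w\}$ and $\mathcal{V}_j=\{v:\bar H_jv\le w_j\}$. $\mathcal{B}(q,r)$ is the closed Euclidean ball of radius $r$ centered at $q$. *)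

theory Defs
  imports "HOL-Analysis.Analysis"
begin

text \<open>Dimensions n_x, n_z, n_c are the finite index types 'x, 'z, 'c.
  Matrices: H :: real^'z^'z, F :: real^'z^'x (n_x by n_z), G :: real^'z^'c, S :: real^'x^'c.\<close>

definition qp_cost :: "real^'z^'z \<Rightarrow> real^'z^'x \<Rightarrow> real^'x \<Rightarrow> real^'z \<Rightarrow> real" where
  "qp_cost H F x z = (1/2) * (z \<bullet> (H *v z)) + x \<bullet> (F *v z)"

definition Zj :: "real^'z^'c \<Rightarrow> real^'x^'c \<Rightarrow> real^'c \<Rightarrow> real^'x \<Rightarrow> 'c \<Rightarrow> (real^'z) set" where
  "Zj G S w x j = {z. (G *v z) $ j \<le> (S *v x) $ j + w $ j}"

definition feasI :: "real^'z^'c \<Rightarrow> real^'x^'c \<Rightarrow> real^'c \<Rightarrow> real^'x \<Rightarrow> 'c set \<Rightarrow> (real^'z) set" where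
  "feasI G S w x I = (\<Inter>j\<in>I. Zj G S w x j)"

definition zstarI :: "real^'z^'z \<Rightarrow> real^'z^'x \<Rightarrow> real^'z^'c \<Rightarrow> real^'x^'c \<Rightarrow> real^'c
    \<Rightarrow> real^'x \<Rightarrow> 'c set \<Rightarrow> real^'z" where
  "zstarI H F G S w x I = (THE z. z \<in> feasI G S w x I \<and>
      (\<forall>z'\<in>feasI G S w x I. qp_cost H F x z \<le> qp_cost H F x z'))"

definition zstar :: "real^'z^'z \<Rightarrow> real^'z^'x \<Rightarrow> real^'z^'c \<Rightarrow> real^'x^'c \<Rightarrow> real^'c
    \<Rightarrow> real^'x \<Rightarrow> real^'z" where
  "zstar H F G S w x = zstarI H F G S w x UNIV"

text \<open>Lifted space R^(n_x+n_z) is rendered as the product (real^'x) \<times> (real^'z),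
  whose norm is the Euclidean norm of the concatenation.
  V_j = {v. Hbar_j v <= w_j} with Hbar = [-S, G].\<close>
definition Vj :: "real^'z^'c \<Rightarrow> real^'x^'c \<Rightarrow> real^'c \<Rightarrow> 'c \<Rightarrow> ((real^'x) \<times> (real^'z)) set" where
  "Vj G S w j = {(a, b). (- (S *v a)) $ j + (G *v b) $ j \<le> w $ j}"

definition Vset :: "real^'z^'c \<Rightarrow> real^'x^'c \<Rightarrow> real^'c \<Rightarrow> ((real^'x) \<times> (real^'z)) set" where
  "Vset G S w = (\<Inter>j. Vj G S w j)"

end

theory Submission
  imports Defs
begin

lemma quad_mid:
  fixes H :: "real^'z^'z" and a b :: "real^'z"
  shows "qp_cost H F x ((1/2) *\<^sub>R (a + b)) =
    (qp_cost H F x a + qp_cost H F x b) / 2 - (1/8) * ((a - b) \<bullet> (H *v (a - b)))"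
  unfolding qp_cost_def
  by (simp add: matrix_vector_mult_scaleR matrix_vector_right_distrib
      matrix_vector_mult_diff_distrib inner_add_left inner_add_right inner_diff_left
      inner_diff_right algebra_simps)

lemma quad_coercive:
  fixes H :: "real^'z^'z"
  assumes pdH: "\<forall>z::real^'z. z \<noteq> 0 \<longrightarrow> z \<bullet> (H *v z) > 0"
  shows "\<exists>m>0. \<forall>z. z \<bullet> (H *v z) \<ge> m * (norm z)^2"
proof -
  have "sphere (0::real^'z) 1 \<noteq> {}"
  proof -
    obtain b :: "real^'z" where "b \<in> Basis" by (meson ex_in_conv nonempty_Basis)
    then have "b \<in> sphere 0 1" by auto
    then show ?thesis by blast
  qed
  moreover have "continuous_on (sphere 0 1) (\<lambda>z::real^'z. z \<bullet> (H *v z))"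
    by (intro continuous_intros)
  ultimately obtain u where u: "u \<in> sphere 0 1" "\<forall>y\<in>sphere 0 1. u \<bullet> (H *v u) \<le> y \<bullet> (H *v y)"
    using continuous_attains_inf[OF compact_sphere] by blast
  have "u \<noteq> 0" using u(1) by auto
  then have upos: "u \<bullet> (H *v u) > 0" using pdH by blast
  have "z \<bullet> (H *v z) \<ge> (u \<bullet> (H *v u)) * (norm z)^2" for z
  proof (cases "z = 0")
    case True then show ?thesis by simp
  next
    case False
    define y where "y = (1 / norm z) *\<^sub>R z"
    have "y \<in> sphere 0 1" using False by (simp add: y_def)
    then have "u \<bullet> (H *v u) \<le> y \<bullet> (H *v y)" using u by blast
    moreover have "z = norm z *\<^sub>R y" using False by (simp add: y_def)
    then have "z \<bullet> (H *v z) = (norm z)^2 * (y \<bullet> (H *v y))"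
      by (metis (no_types, lifting) inner_scaleR_left inner_scaleR_right matrix_vector_mult_scaleR
          mult.assoc power2_eq_square)
    ultimately show ?thesis
      by (metis mult.commute mult_right_mono zero_le_power2)
  qed
  then show ?thesis using upos by blast
qed

lemma min_exists:
  fixes H :: "real^'z^'z" and F :: "real^'z^'x" and K :: "(real^'z) set"
  assumes pdH: "\<forall>z::real^'z. z \<noteq> 0 \<longrightarrow> z \<bullet> (H *v z) > 0"
    and K: "closed K" "convex K" "K \<noteq> {}"
  shows "\<exists>!z. z \<in> K \<and> (\<forall>z'\<in>K. qp_cost H F x z \<le> qp_cost H F x z')"
proof -
  obtain m where m: "m > 0" "\<And>z. z \<bullet> (H *v z) \<ge> m * (norm z)^2"
    using quad_coercive[OF pdH] by blast
  obtain z0 where z0: "z0 \<in> K" using K by blast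
  define C where "C = qp_cost H F x z0"
  define c where "c = norm (x v* F)"
  define L where "L = K \<inter> {z. qp_cost H F x z \<le> C}"
  have lb: "qp_cost H F x z \<ge> m/2 * (norm z)^2 - c * norm z" for z
  proof -
    have "\<bar>x \<bullet> (F *v z)\<bar> \<le> c * norm z"
      unfolding c_def dot_lmul_matrix[symmetric] by (rule Cauchy_Schwarz_ineq2)
    then have l: "x \<bullet> (F *v z) \<ge> - (c * norm z)" by (simp add: abs_le_iff)
    have q: "z \<bullet> (H *v z) \<ge> m * (norm z)^2" by (rule m(2))
    have e: "qp_cost H F x z = (1/2) * (z \<bullet> (H *v z)) + x \<bullet> (F *v z)"
      by (simp add: qp_cost_def)
    have aux: "\<And>A B L D::real. A \<ge> B \<Longrightarrow> L \<ge> - D \<Longrightarrow> (1/2) * A + L \<ge> B/2 - D"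
      by linarith
    show ?thesis unfolding e using aux[OF q l] by simp
  qed
  have bnd: "norm z \<le> max 1 (2 * (c + \<bar>C\<bar>) / m)" if "z \<in> L" for z
  proof (rule ccontr)
    assume "\<not> ?thesis"
    then have t1: "norm z > 1" and t2: "norm z > 2 * (c + \<bar>C\<bar>) / m" by auto
    have "m/2 * (norm z)^2 - c * norm z \<le> C" using lb[of z] that L_def by auto
    also have "C \<le> \<bar>C\<bar> * norm z"
    proof -
      have "\<bar>C\<bar> * 1 \<le> \<bar>C\<bar> * norm z" by (rule mult_left_mono) (use t1 in auto)
      then show ?thesis by linarith
    qed
    finally have "m/2 * norm z * norm z \<le> (c + \<bar>C\<bar>) * norm z"
      by (simp add: power2_eq_square algebra_simps)
    then have "m/2 * norm z \<le> c + \<bar>C\<bar>"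
      by (rule mult_right_le_imp_le) (use t1 in auto)
    then have "norm z \<le> 2 * (c + \<bar>C\<bar>) / m" using m(1) by (simp add: field_simps)
    then show False using t2 by simp
  qed
  have cont: "continuous_on UNIV (qp_cost H F x)"
    unfolding qp_cost_def by (intro continuous_intros)
  have "closed L" unfolding L_def
    by (intro closed_Int K(1) closed_Collect_le continuous_on_subset[OF cont] continuous_intros) auto
  moreover have "bounded L" using bnd unfolding bounded_iff by blast
  ultimately have "compact L" by (simp add: compact_eq_bounded_closed)
  moreover have "L \<noteq> {}" using z0 unfolding L_def C_def by auto
  moreover have "continuous_on L (qp_cost H F x)" using cont continuous_on_subset by blast
  ultimately obtain zm where zm: "zm \<in> L" "\<forall>y\<in>L. qp_cost H F x zm \<le> qp_cost H F x y"
    using continuous_attains_inf by blast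
  have ismin: "zm \<in> K \<and> (\<forall>z'\<in>K. qp_cost H F x zm \<le> qp_cost H F x z')"
  proof (intro conjI ballI)
    show "zm \<in> K" using zm L_def by auto
    fix z' assume "z' \<in> K"
    show "qp_cost H F x zm \<le> qp_cost H F x z'"
    proof (cases "qp_cost H F x z' \<le> C")
      case True then show ?thesis using zm \<open>z' \<in> K\<close> L_def by auto
    next
      case False then show ?thesis using zm(1) L_def by auto
    qed
  qed
  have uniq: "a = b" if a: "a \<in> K \<and> (\<forall>z'\<in>K. qp_cost H F x a \<le> qp_cost H F x z')"
    and b: "b \<in> K \<and> (\<forall>z'\<in>K. qp_cost H F x b \<le> qp_cost H F x z')" for a b
  proof (rule ccontr)
    assume "a \<noteq> b"
    then have q: "(a - b) \<bullet> (H *v (a - b)) > 0" using pdH by auto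
    have "(1/2) *\<^sub>R (a + b) \<in> K"
      using convexD[OF K(2), of a b "1/2" "1/2"] a b by (simp add: scaleR_right_distrib)
    then have "qp_cost H F x a \<le> qp_cost H F x ((1/2) *\<^sub>R (a + b))"
      and "qp_cost H F x b \<le> qp_cost H F x a" using a b by auto
    moreover have aux: "\<And>A B M Q::real. A \<le> M \<Longrightarrow> B \<le> A \<Longrightarrow> 0 < Q \<Longrightarrow> M = (A + B) / 2 - 1/8 * Q \<Longrightarrow> False"
      by (simp add: field_simps)
    ultimately show False using q quad_mid[of H F x a b] by blast
  qed
  show ?thesis using ismin uniq by blast
qed

theorem lemma5:
  fixes H :: "real^'z^'z" and F :: "real^'z^'x" and G :: "real^'z^'c"
    and S :: "real^'x^'c" and w :: "real^'c" and \<kappa> :: real and x xh :: "real^'x"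
  assumes symH: "transpose H = H"
    and pdH: "\<forall>z::real^'z. z \<noteq> 0 \<longrightarrow> z \<bullet> (H *v z) > 0"
    and feas: "\<forall>x'::real^'x. {z. \<forall>j. (G *v z) $ j \<le> (S *v x') $ j + w $ j} \<noteq> {}"
    and lip: "\<forall>x1 x2 I. norm (zstarI H F G S w x1 I - zstarI H F G S w x2 I) \<le> \<kappa> * norm (x1 - x2)"
  shows "(xh, zstar H F G S w xh) \<in> Vset G S w \<and>
    {j. cball (xh, zstar H F G S w xh) (sqrt (1 + \<kappa>^2) * norm (x - xh)) \<subseteq> Vj G S w j}
      \<subseteq> {j. cball (zstar H F G S w xh) (\<kappa> * norm (x - xh)) \<subseteq> Zj G S w x j}"
proof
  define K where "K = feasI G S w xh UNIV"
  have Keq: "K = {z. \<forall>j. (G *v z) $ j \<le> (S *v xh) $ j + w $ j}"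
    unfolding K_def feasI_def Zj_def by auto
  have "closed K" unfolding Keq
    by (simp only: Collect_all_eq) (intro closed_INT ballI closed_Collect_le continuous_intros)
  moreover have "convex K" unfolding K_def feasI_def Zj_def
  proof (intro convex_INT ballI)
    fix j
    have "{z. (G *v z) $ j \<le> (S *v xh) $ j + w $ j} = {z. (\<chi> i. G $ j $ i) \<bullet> z \<le> (S *v xh) $ j + w $ j}"
      by (simp add: matrix_vector_mult_def inner_vec_def)
    then show "convex {z. (G *v z) $ j \<le> (S *v xh) $ j + w $ j}"
      by (simp add: convex_halfspace_le)
  qed
  moreover have "K \<noteq> {}" using feas Keq by auto
  ultimately have "\<exists>!z. z \<in> K \<and> (\<forall>z'\<in>K. qp_cost H F xh z \<le> qp_cost H F xh z')"
    using min_exists[OF pdH] by blast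
  from theI'[OF this] have "zstar H F G S w xh \<in> K"
    unfolding zstar_def zstarI_def K_def[symmetric] by blast
  then have h: "\<And>j. (G *v zstar H F G S w xh) $ j \<le> (S *v xh) $ j + w $ j"
    unfolding Keq by blast
  have "(xh, zstar H F G S w xh) \<in> Vj G S w j" for j
    using h[of j] by (simp add: Vj_def)
  then show "(xh, zstar H F G S w xh) \<in> Vset G S w"
    unfolding Vset_def by blast
next
  show "{j. cball (xh, zstar H F G S w xh) (sqrt (1 + \<kappa>^2) * norm (x - xh)) \<subseteq> Vj G S w j}
      \<subseteq> {j. cball (zstar H F G S w xh) (\<kappa> * norm (x - xh)) \<subseteq> Zj G S w x j}"
  proof (rule subsetI, rule CollectI)
    fix j
    assume "j \<in> {j. cball (xh, zstar H F G S w xh) (sqrt (1 + \<kappa>^2) * norm (x - xh)) \<subseteq> Vj G S w j}"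
    then have hj: "cball (xh, zstar H F G S w xh) (sqrt (1 + \<kappa>^2) * norm (x - xh)) \<subseteq> Vj G S w j"
      by simp
    show "cball (zstar H F G S w xh) (\<kappa> * norm (x - xh)) \<subseteq> Zj G S w x j"
    proof
      fix z assume "z \<in> cball (zstar H F G S w xh) (\<kappa> * norm (x - xh))"
      then have dz: "dist (zstar H F G S w xh) z \<le> \<kappa> * norm (x - xh)" by simp
      define d where "d = norm (x - xh)"
      have dd: "dist xh x = d" by (simp add: d_def dist_norm norm_minus_commute)
      have "(dist (zstar H F G S w xh) z)^2 \<le> (\<kappa> * d)^2"
        using dz d_def by (simp add: power_mono)
      then have "(dist xh x)^2 + (dist (zstar H F G S w xh) z)^2 \<le> ((sqrt (1 + \<kappa>^2)) * d)^2"
        using dd by (simp add: power_mult_distrib algebra_simps)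
      then have "sqrt ((dist xh x)^2 + (dist (zstar H F G S w xh) z)^2) \<le> sqrt (1 + \<kappa>^2) * d"
      proof -
        have "d \<ge> 0" by (simp add: d_def)
        then show ?thesis using real_sqrt_le_mono[OF \<open>_ \<le> (sqrt (1 + \<kappa>^2) * d)^2\<close>]
          by (simp add: abs_mult)
      qed
      then have "(x, z) \<in> cball (xh, zstar H F G S w xh) (sqrt (1 + \<kappa>^2) * norm (x - xh))"
        by (simp add: dist_Pair_Pair d_def)
      then have "(x, z) \<in> Vj G S w j" using hj by blast
      then show "z \<in> Zj G S w x j" unfolding Vj_def Zj_def by auto
    qed
  qed
qed

end
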